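(* Let $b\ge3$, $1\le j\le b-1$, $0<\epsilon\le\frac1{j+1}$. Let $p,q$ be probability vectors in $\mathbb R^b$ with $p_1\ge1-\epsilon$ and $q_1\le q_2\le\dots\le q_b$. Then $$\Psi_j(p_1,\dots,p_b;\,q_1,q_2,\dots,q_b)\le\Psi_j(p_1,\dots,p_b;\,0,q_1+q_2,q_3,\dots,q_b).$$
   Context: For an integer $1\le j\le b-1$ and vectors $p,q\in\mathbb R^b$, $$\Psi_j(p;q)=\frac{1}{(b-j-1)!}\sum_{\sigma\in S_b}\Big(p_{\sigma(1)}\cdots p_{\sigma(j)}\,q_{\sigma(j+1)}+q_{\sigma(1)}\cdots q_{\sigma(j)}\,p_{\sigma(j+1)}\Big),$$ where $S_b$ is the set of permutations of $\{1,\dots,b\}$; the first $b$ arguments form $p$ and the last $b$ form $q$. *)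

theory Defs
  imports "HOL-Combinatorics.Permutations" Complex_Main
begin

text \<open>Vectors in R^b are represented as functions nat => real, with coordinates indexed 1..b;
  S_b is the set of permutations of {1..b}.\<close>

definition Psi :: "nat \<Rightarrow> nat \<Rightarrow> (nat \<Rightarrow> real) \<Rightarrow> (nat \<Rightarrow> real) \<Rightarrow> real" where
  "Psi b j p q = (1 / fact (b - j - 1)) *
     (\<Sum>\<sigma>\<in>{\<sigma>. \<sigma> permutes {1..b}}.
        (\<Prod>i=1..j. p (\<sigma> i)) * q (\<sigma> (j+1)) + (\<Prod>i=1..j. q (\<sigma> i)) * p (\<sigma> (j+1)))"

definition prob_vec :: "nat \<Rightarrow> (nat \<Rightarrow> real) \<Rightarrow> bool" where
  "prob_vec b p \<longleftrightarrow> (\<forall>i\<in>{1..b}. 0 \<le> p i) \<and> (\<Sum>i=1..b. p i) = 1"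

end

theory Submission
  imports Defs
begin

definition Hf :: "(nat\<Rightarrow>real) \<Rightarrow> (nat\<Rightarrow>real) \<Rightarrow> (nat\<Rightarrow>real) \<Rightarrow> nat set \<Rightarrow> real" where
 "Hf p q qq W = (\<Sum>k\<in>W. (qq k - q k) * prod p (W - {k}) + (prod qq (W - {k}) - prod q (W - {k})) * p k)"

lemma img_transpose:
  assumes "a \<in> {1..j+1}"
  shows "transpose a (j+1) ` {1..j} = {1..j+1} - {a::nat}"
  using assms by (auto simp: transpose_def image_iff)

lemma prod_transpose:
  assumes "inj (\<sigma>::nat\<Rightarrow>nat)" "a \<in> {1..j+1}"
  shows "(\<Prod>i=1..j. r (\<sigma> (transpose a (j+1) i))) = prod r (\<sigma> ` {1..j+1} - {\<sigma> a})"
proof -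
  have inj: "inj_on (\<sigma> \<circ> transpose a (j+1)) {1..j}"
    using assms(1) by (intro comp_inj_on) (auto intro: inj_on_subset)
  have "(\<Prod>i=1..j. r (\<sigma> (transpose a (j+1) i))) = prod r ((\<sigma> \<circ> transpose a (j+1)) ` {1..j})"
    using prod.reindex[OF inj, of r] by (simp add: o_def)
  also have "(\<sigma> \<circ> transpose a (j+1)) ` {1..j} = \<sigma> ` ({1..j+1} - {a})"
    by (simp only: image_comp[symmetric] img_transpose[OF assms(2)])
  also have "\<dots> = \<sigma> ` {1..j+1} - {\<sigma> a}"
    using assms(1) by (simp add: image_set_diff)
  finally show ?thesis .
qed

lemma H_c:
  fixes p q qq :: "nat \<Rightarrow> real"
  assumes fin: "finite V" and n1: "1 \<notin> V" and n2: "2 \<notin> V"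
    and qq: "qq = q(1:=0, 2:= q 1 + q 2)"
  shows "Hf p q qq (insert 1 V) + Hf p q qq (insert 2 V) = 0"
proof -
  have qqV: "prod qq S = prod q S" if "S \<subseteq> V" for S
    using that n1 n2 qq by (intro prod.cong) auto
  have qqk: "qq k = q k" if "k \<in> V" for k using that n1 n2 qq by auto
  have r1: "Hf p q qq (insert 1 V) = - q 1 * prod p V + (\<Sum>k\<in>V. - (q 1 * prod q (V - {k})) * p k)"
  proof -
    have "Hf p q qq (insert 1 V) = (qq 1 - q 1) * prod p V + (prod qq V - prod q V) * p 1
       + (\<Sum>k\<in>V. (qq k - q k) * prod p (insert 1 V - {k}) + (prod qq (insert 1 V - {k}) - prod q (insert 1 V - {k})) * p k)"
      unfolding Hf_def using fin n1 by (simp add: sum.insert)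
    also have "\<dots> = - q 1 * prod p V + (\<Sum>k\<in>V. - (q 1 * prod q (V - {k})) * p k)"
    proof -
      have "(\<Sum>k\<in>V. (qq k - q k) * prod p (insert 1 V - {k}) + (prod qq (insert 1 V - {k}) - prod q (insert 1 V - {k})) * p k)
          = (\<Sum>k\<in>V. - (q 1 * prod q (V - {k})) * p k)"
      proof (rule sum.cong)
        fix k assume k: "k \<in> V"
        have e: "insert 1 V - {k} = insert 1 (V - {k})" using k n1 by auto
        show "(qq k - q k) * prod p (insert 1 V - {k}) + (prod qq (insert 1 V - {k}) - prod q (insert 1 V - {k})) * p k
           = - (q 1 * prod q (V - {k})) * p k"
          unfolding e using fin n1 qqk[OF k] qqV[of "V - {k}"] qq by (simp add: prod.insert)
      qed simp
      then show ?thesis using qqV[of V] qq by simp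
    qed
    finally show ?thesis .
  qed
  have r2: "Hf p q qq (insert 2 V) = q 1 * prod p V + (\<Sum>k\<in>V. (q 1 * prod q (V - {k})) * p k)"
  proof -
    have "Hf p q qq (insert 2 V) = (qq 2 - q 2) * prod p V + (prod qq V - prod q V) * p 2
       + (\<Sum>k\<in>V. (qq k - q k) * prod p (insert 2 V - {k}) + (prod qq (insert 2 V - {k}) - prod q (insert 2 V - {k})) * p k)"
      unfolding Hf_def using fin n2 by (simp add: sum.insert)
    also have "\<dots> = q 1 * prod p V + (\<Sum>k\<in>V. (q 1 * prod q (V - {k})) * p k)"
    proof -
      have "(\<Sum>k\<in>V. (qq k - q k) * prod p (insert 2 V - {k}) + (prod qq (insert 2 V - {k}) - prod q (insert 2 V - {k})) * p k)
          = (\<Sum>k\<in>V. (q 1 * prod q (V - {k})) * p k)"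
      proof (rule sum.cong)
        fix k assume k: "k \<in> V"
        have e: "insert 2 V - {k} = insert 2 (V - {k})" using k n2 by auto
        show "(qq k - q k) * prod p (insert 2 V - {k}) + (prod qq (insert 2 V - {k}) - prod q (insert 2 V - {k})) * p k
           = (q 1 * prod q (V - {k})) * p k"
          unfolding e using fin n2 qqk[OF k] qqV[of "V - {k}"] qq by (simp add: prod.insert algebra_simps)
      qed simp
      then show ?thesis using qqV[of V] qq by simp
    qed
    finally show ?thesis .
  qed
  show ?thesis unfolding r1 r2 by (simp add: sum_negf)
qed

lemma H_b:
  fixes p q qq :: "nat \<Rightarrow> real"
  assumes fin: "finite V" and n1: "1 \<notin> V" and n2: "2 \<notin> V"
    and qq: "qq = q(1:=0, 2:= q 1 + q 2)"
    and pnn: "\<And>k. k \<in> insert 1 (insert 2 V) \<Longrightarrow> 0 \<le> p k"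
    and qnn: "\<And>k. k \<in> insert 1 (insert 2 V) \<Longrightarrow> 0 \<le> q k"
    and q2: "\<And>k. k \<in> V \<Longrightarrow> q 2 \<le> q k"
    and psum: "p 1 + p 2 + sum p V \<le> 1" and p1: "p 1 \<ge> 1/2"
  shows "Hf p q qq (insert 1 (insert 2 V)) \<ge> 0"
proof -
  let ?W = "insert 1 (insert 2 V)"
  have qqV: "prod qq S = prod q S" if "S \<subseteq> V" for S
    using that n1 n2 qq by (intro prod.cong) auto
  have qqk: "qq k = q k" if "k \<in> V" for k using that n1 n2 qq by auto
  have e1: "?W - {1} = insert 2 V" using n1 by auto
  have e2: "insert (Suc 0) (insert 2 V) - {2} = insert (Suc 0) V" using n2 by auto
  have "Hf p q qq ?W = ((qq 1 - q 1) * prod p (insert 2 V) + (prod qq (insert 2 V) - prod q (insert 2 V)) * p 1)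
     + (\<Sum>k\<in>insert 2 V. (qq k - q k) * prod p (?W - {k}) + (prod qq (?W - {k}) - prod q (?W - {k})) * p k)"
    unfolding Hf_def using fin n1 by (subst sum.insert) (auto simp: e1)
  also have "(\<Sum>k\<in>insert 2 V. (qq k - q k) * prod p (?W - {k}) + (prod qq (?W - {k}) - prod q (?W - {k})) * p k)
     = ((qq 2 - q 2) * prod p (insert 1 V) + (prod qq (insert 1 V) - prod q (insert 1 V)) * p 2)
     + (\<Sum>k\<in>V. (qq k - q k) * prod p (?W - {k}) + (prod qq (?W - {k}) - prod q (?W - {k})) * p k)"
    using fin n2 by (subst sum.insert) (auto simp: e2)
  also have "(\<Sum>k\<in>V. (qq k - q k) * prod p (?W - {k}) + (prod qq (?W - {k}) - prod q (?W - {k})) * p k)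
     = (\<Sum>k\<in>V. - (q 1 * (q 2 * prod q (V - {k}))) * p k)"
  proof (rule sum.cong)
    fix k assume k: "k \<in> V"
    have e: "?W - {k} = insert 1 (insert 2 (V - {k}))" using k n1 n2 by auto
    show "(qq k - q k) * prod p (?W - {k}) + (prod qq (?W - {k}) - prod q (?W - {k})) * p k
       = - (q 1 * (q 2 * prod q (V - {k}))) * p k"
      unfolding e using fin n1 n2 qqk[OF k] qqV[of "V - {k}"] qq by (simp add: prod.insert)
  qed simp
  finally have H0: "Hf p q qq ?W = ((qq 1 - q 1) * prod p (insert 2 V) + (prod qq (insert 2 V) - prod q (insert 2 V)) * p 1)
     + (((qq 2 - q 2) * prod p (insert 1 V) + (prod qq (insert 1 V) - prod q (insert 1 V)) * p 2)
     + (\<Sum>k\<in>V. - (q 1 * (q 2 * prod q (V - {k}))) * p k))" .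
  have v1: "qq 1 = 0" "qq 2 = q 1 + q 2" using qq by auto
  have v2: "prod qq (insert 2 V) = (q 1 + q 2) * prod q V" "prod qq (insert 1 V) = 0"
    using fin n1 n2 qqV[of V] v1 by (simp_all add: prod.insert)
  have v3: "prod p (insert 2 V) = p 2 * prod p V" "prod p (insert 1 V) = p 1 * prod p V"
     "prod q (insert 2 V) = q 2 * prod q V" "prod q (insert 1 V) = q 1 * prod q V"
    using fin n1 n2 by (simp_all add: prod.insert)
  have H: "Hf p q qq ?W = q 1 * (p 1 - p 2) * (prod p V + prod q V)
      - q 1 * (\<Sum>k\<in>V. q 2 * prod q (V - {k}) * p k)"
    unfolding H0 v1 v2 v3
    by (simp add: sum_negf sum_distrib_left algebra_simps)
  have b1: "(\<Sum>k\<in>V. q 2 * prod q (V - {k}) * p k) \<le> (\<Sum>k\<in>V. prod q V * p k)"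
  proof (rule sum_mono)
    fix k assume k: "k \<in> V"
    have "prod q V = q k * prod q (V - {k})" using fin k by (simp add: prod.remove)
    moreover have "0 \<le> prod q (V - {k})" using qnn by (intro prod_nonneg) auto
    moreover have "0 \<le> p k" using pnn k by auto
    ultimately show "q 2 * prod q (V - {k}) * p k \<le> prod q V * p k"
      using q2[OF k] by (simp add: mult_right_mono)
  qed
  have spnn: "0 \<le> sum p V" using pnn by (intro sum_nonneg) auto
  have "p 2 \<ge> 0" using pnn by auto
  then have d: "sum p V \<le> p 1 - p 2" "p 2 \<le> p 1" using psum p1 spnn by linarith+
  have Qnn: "0 \<le> prod q V" using qnn by (intro prod_nonneg) auto
  have Pnn: "0 \<le> prod p V" using pnn by (intro prod_nonneg) auto
  have "(\<Sum>k\<in>V. q 2 * prod q (V - {k}) * p k) \<le> prod q V * (p 1 - p 2)"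
    using b1 d(1) Qnn by (simp add: sum_distrib_left[symmetric]) (meson mult_left_mono order_trans)
  also have "\<dots> \<le> (p 1 - p 2) * (prod p V + prod q V)" using Pnn d(2) by (simp add: algebra_simps mult_left_mono)
  finally have "q 1 * (\<Sum>k\<in>V. q 2 * prod q (V - {k}) * p k) \<le> q 1 * ((p 1 - p 2) * (prod p V + prod q V))"
    using qnn[of 1] by (simp add: mult_left_mono)
  then show ?thesis unfolding H by (simp add: algebra_simps)
qed

lemma H_a:
  fixes p q qq :: "nat \<Rightarrow> real"
  assumes n1: "1 \<notin> W" and n2: "2 \<notin> W" and qq: "qq = q(1:=0, 2:= q 1 + q 2)"
  shows "Hf p q qq W = 0"
proof -
  have qqV: "prod qq S = prod q S" if "S \<subseteq> W" for S
    using that n1 n2 qq by (intro prod.cong) auto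
  have qqk: "qq k = q k" if "k \<in> W" for k using that n1 n2 qq by auto
  show ?thesis unfolding Hf_def
    by (rule sum.neutral) (auto simp: qqk qqV)
qed

lemma H_pair:
  fixes p q qq :: "nat \<Rightarrow> real"
  assumes W: "W \<subseteq> {1..b}" and qq: "qq = q(1:=0, 2:= q 1 + q 2)"
    and pnn: "\<And>k. k \<in> {1..b} \<Longrightarrow> 0 \<le> p k"
    and qnn: "\<And>k. k \<in> {1..b} \<Longrightarrow> 0 \<le> q k"
    and q2: "\<And>k. k \<in> {3..b} \<Longrightarrow> q 2 \<le> q k"
    and psum: "sum p {1..b} = 1" and p1: "p 1 \<ge> 1/2"
  shows "Hf p q qq W + Hf p q qq (transpose 1 2 ` W) \<ge> 0"
proof -
  have fin: "finite W" using W finite_subset by blast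
  consider "1 \<notin> W" "2 \<notin> W" | "1 \<in> W" "2 \<in> W" | "1 \<in> W" "2 \<notin> W" | "1 \<notin> W" "2 \<in> W" by blast
  then show ?thesis
  proof cases
    case 1
    have "transpose 1 2 ` W = W" using 1 by (auto simp: transpose_def image_iff)
    then show ?thesis using H_a[OF 1 qq] by simp
  next
    case 2
    have img: "transpose 1 2 ` W = W" using 2 by (auto simp: transpose_def image_iff)
    define V where "V = W - {1,2}"
    have WV: "W = insert 1 (insert 2 V)" using 2 V_def by auto
    have Vs: "V \<subseteq> {3..b}" using W V_def by auto
    have finV: "finite V" using fin V_def by auto
    have n12: "1 \<notin> V" "2 \<notin> V" using V_def by auto
    have "p 1 + p 2 + sum p V = sum p W" unfolding WV using finV n12 by simp
    also have "\<dots> \<le> sum p {1..b}" using W pnn by (intro sum_mono2) auto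
    finally have ps: "p 1 + p 2 + sum p V \<le> 1" using psum by simp
    have Wsub: "insert 1 (insert 2 V) \<subseteq> {1..b}" using W WV by simp
    have Wk: "k \<in> {1..b}" if "k \<in> insert 1 (insert 2 V)" for k using Wsub that by blast
    have "Hf p q qq W \<ge> 0" unfolding WV
      by (rule H_b[OF finV _ _ qq]) (fact n12(1), fact n12(2), rule pnn[OF Wk], assumption, rule qnn[OF Wk], assumption,
          rule q2, use Vs in blast, fact ps, fact p1)
    then show ?thesis using img by simp
  next
    case 3
    define V where "V = W - {1}"
    have WV: "W = insert 1 V" using 3 V_def by auto
    have iV: "transpose 1 2 ` V = V" using 3 V_def by (auto simp: transpose_def image_iff)
    have img: "transpose 1 2 ` W = insert 2 V" unfolding WV image_insert iV by simp
    have "finite V" "1 \<notin> V" "2 \<notin> V" using fin 3 V_def by auto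
    from H_c[OF this qq, of p] show ?thesis unfolding WV[symmetric] img by simp
  next
    case 4
    define V where "V = W - {2}"
    have WV: "W = insert 2 V" using 4 V_def by auto
    have iV: "transpose 1 2 ` V = V" using 4 V_def by (auto simp: transpose_def image_iff)
    have img: "transpose 1 2 ` W = insert 1 V" unfolding WV image_insert iV by simp
    have "finite V" "1 \<notin> V" "2 \<notin> V" using fin 4 V_def by auto
    from H_c[OF this qq, of p] show ?thesis unfolding WV[symmetric] img by simp
  qed
qed

definition Dt :: "nat \<Rightarrow> (nat\<Rightarrow>real) \<Rightarrow> (nat\<Rightarrow>real) \<Rightarrow> (nat\<Rightarrow>real) \<Rightarrow> (nat\<Rightarrow>nat) \<Rightarrow> real" where
"Dt j p q qq \<rho> = ((\<Prod>i=1..j. p (\<rho> i)) * qq (\<rho> (j+1)) + (\<Prod>i=1..j. qq (\<rho> i)) * p (\<rho> (j+1)))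
   - ((\<Prod>i=1..j. p (\<rho> i)) * q (\<rho> (j+1)) + (\<Prod>i=1..j. q (\<rho> i)) * p (\<rho> (j+1)))"

lemma G_eq:
  assumes inj: "inj (\<sigma>::nat\<Rightarrow>nat)"
  shows "(\<Sum>a\<in>{1..j+1}. Dt j p q qq (\<sigma> \<circ> transpose a (j+1))) = Hf p q qq (\<sigma> ` {1..j+1})"
proof -
  let ?W = "\<sigma> ` {1..j+1}"
  define F where "F k = (qq k - q k) * prod p (?W - {k}) + (prod qq (?W - {k}) - prod q (?W - {k})) * p k" for k
  have "Dt j p q qq (\<sigma> \<circ> transpose a (j+1)) = F (\<sigma> a)" if a: "a \<in> {1..j+1}" for a
    unfolding Dt_def F_def comp_apply prod_transpose[OF inj a, of p] prod_transpose[OF inj a, of q] prod_transpose[OF inj a, of qq]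
    by (simp add: algebra_simps)
  then have "(\<Sum>a\<in>{1..j+1}. Dt j p q qq (\<sigma> \<circ> transpose a (j+1))) = (\<Sum>a\<in>{1..j+1}. F (\<sigma> a))"
    by (intro sum.cong) auto
  also have "\<dots> = sum F ?W"
    using sum.reindex[of \<sigma> "{1..j+1}" F] inj by (simp add: inj_on_def)
  finally show ?thesis unfolding Hf_def F_def .
qed

lemma q_mono:
  fixes q :: "nat \<Rightarrow> real"
  assumes "\<forall>i\<in>{1..<b}. q i \<le> q (i + 1)" "2 \<le> k"
  shows "k \<le> b \<longrightarrow> q 2 \<le> q k"
  using assms(2)
proof (induction k rule: dec_induct)
  case base then show ?case by simp
next
  case (step m)
  then show ?case using assms(1) by (auto intro: order_trans)
qed

theorem mainTheorem9:
  fixes b j :: nat and \<epsilon> :: real and p q :: "nat \<Rightarrow> real"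
  assumes "b \<ge> 3" and "1 \<le> j" and "j \<le> b - 1"
    and "0 < \<epsilon>" and "\<epsilon> \<le> 1 / (real j + 1)"
    and "prob_vec b p" and "prob_vec b q"
    and "p 1 \<ge> 1 - \<epsilon>"
    and "\<forall>i\<in>{1..<b}. q i \<le> q (i + 1)"
  shows "Psi b j p q \<le> Psi b j p (q(1 := 0, 2 := q 1 + q 2))"
proof -
  define qq where "qq = q(1 := 0, 2 := q 1 + q 2)"
  define P where "P = {\<sigma>. \<sigma> permutes {1..b}}"
  define N where "N = {1..j+1}"
  have jb: "j + 1 \<le> b" using assms(1,3) by linarith
  have "1 / (real j + 1) \<le> 1/2" using assms(2) by (simp add: field_simps)
  then have p1: "p 1 \<ge> 1/2" using assms(5,8) by linarith
  have pnn: "\<And>k. k \<in> {1..b} \<Longrightarrow> 0 \<le> p k" and psum: "sum p {1..b} = 1"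
    using assms(6) unfolding prob_vec_def by auto
  have qnn: "\<And>k. k \<in> {1..b} \<Longrightarrow> 0 \<le> q k"
    using assms(7) unfolding prob_vec_def by auto
  have q2: "\<And>k. k \<in> {3..b} \<Longrightarrow> q 2 \<le> q k"
    using q_mono[OF assms(9)] by auto
  have diff: "Psi b j p qq - Psi b j p q = (1 / fact (b - j - 1)) * (\<Sum>\<sigma>\<in>P. Dt j p q qq \<sigma>)"
    unfolding Psi_def Dt_def P_def by (simp add: sum_subtractf right_diff_distrib)
  have shift: "(\<Sum>\<sigma>\<in>P. Dt j p q qq \<sigma>) = (\<Sum>\<sigma>\<in>P. Dt j p q qq (\<sigma> \<circ> transpose a (j+1)))"
    if a: "a \<in> N" for a
    unfolding P_def
    by (rule sum_permutations_compose_right, rule permutes_swap_id) (use a jb N_def in auto)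
  have "real (j+1) * (\<Sum>\<sigma>\<in>P. Dt j p q qq \<sigma>) = (\<Sum>a\<in>N. \<Sum>\<sigma>\<in>P. Dt j p q qq \<sigma>)"
    by (simp add: N_def)
  also have "\<dots> = (\<Sum>a\<in>N. \<Sum>\<sigma>\<in>P. Dt j p q qq (\<sigma> \<circ> transpose a (j+1)))"
    using shift by (rule sum.cong[OF refl])
  also have "\<dots> = (\<Sum>\<sigma>\<in>P. \<Sum>a\<in>N. Dt j p q qq (\<sigma> \<circ> transpose a (j+1)))"
    by (rule sum.swap)
  also have "\<dots> = (\<Sum>\<sigma>\<in>P. Hf p q qq (\<sigma> ` N))"
    unfolding N_def P_def by (intro sum.cong refl G_eq) (auto dest: permutes_inj)
  finally have T: "real (j+1) * (\<Sum>\<sigma>\<in>P. Dt j p q qq \<sigma>) = (\<Sum>\<sigma>\<in>P. Hf p q qq (\<sigma> ` N))" .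
  have tau: "transpose 1 2 permutes {1..b}" using assms(1) by (intro permutes_swap_id) auto
  have "(\<Sum>\<sigma>\<in>P. Hf p q qq (\<sigma> ` N)) = (\<Sum>\<sigma>\<in>P. Hf p q qq ((transpose 1 2 \<circ> \<sigma>) ` N))"
    unfolding P_def by (rule setum_permutations_compose_left[OF tau])
  then have "2 * (\<Sum>\<sigma>\<in>P. Hf p q qq (\<sigma> ` N)) = (\<Sum>\<sigma>\<in>P. Hf p q qq (\<sigma> ` N) + Hf p q qq (transpose 1 2 ` (\<sigma> ` N)))"
    by (simp add: sum.distrib image_comp)
  also have "\<dots> \<ge> 0"
  proof (rule sum_nonneg)
    fix \<sigma> assume "\<sigma> \<in> P"
    then have "\<sigma> ` N \<subseteq> {1..b}" unfolding P_def N_def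
      using jb permutes_image[of \<sigma> "{1..b}"] by auto
    then show "0 \<le> Hf p q qq (\<sigma> ` N) + Hf p q qq (transpose 1 2 ` (\<sigma> ` N))"
      by (rule H_pair[OF _ qq_def pnn qnn q2 psum p1])
  qed
  finally have "0 \<le> real (j+1) * (\<Sum>\<sigma>\<in>P. Dt j p q qq \<sigma>)" using T by simp
  then have "0 \<le> (\<Sum>\<sigma>\<in>P. Dt j p q qq \<sigma>)"
    by (simp add: zero_le_mult_iff add_pos_nonneg)
  then have "0 \<le> Psi b j p qq - Psi b j p q" unfolding diff by simp
  then show ?thesis unfolding qq_def by simp
qed

end
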